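(* The initial algebra of the endofunctor $F=M\otimes-$ on $\mathbf{Met_3}^{C}$ is $(G_\rho,g)$, where $G_\rho$ is the carrier $G$ of the initial $F$-algebra $(G,g)$ in $\mathbf{Set_3}$ equipped with the discrete metric, and $g\colon M\otimes G_\rho\to G_\rho$ is the same structure map as in $\mathbf{Set_3}$. Moreover, for every $F$-algebra $(A,\alpha)$ in $\mathbf{Met_3}^{C}$, the algebra morphisms $G_\rho\to A$ in $\mathbf{Met_3}^{C}$ are exactly the algebra morphisms $G\to A$ in $\mathbf{Set_3}$.
   Context: A tripointed set is a set with three distinct distinguished points $T,L,R$; $\mathbf{Set_3}$ is the category of tripointed sets with maps preserving $T,L,R$. A tripointed metric space is a tripointed set with a metric bounded by $1$ in which $T,L,R$ have pairwise distance $1$; $\mathbf{Met_3}^{C}$ has these as objects and continuous maps preserving $T,L,R$ as morphisms. Let $M=\{a,b,c\}$. $F=M\otimes-$: $M\otimes X$ is the quotient of $M\times X$ by the equivalence relation generated by $(b,T)\sim(a,L)$, $(a,R)\sim(c,T)$, $(c,L)\sim(b,R)$, elements written $m\otimes x$, distinguished points $a\otimes T$, $b\otimes L$, $c\otimes R$, and $(M\otimes f)(m\otimes x)=m\otimes f(x)$; in the metric setting $M\times X$ has metric $\tfrac12 d(x,y)$ within a copy and $1$ between different copies, and $M\otimes X$ has the quotient metric. An $F$-algebra is a pair $(A,\alpha\colon FA\to A)$; an algebra morphism $h\colon(A,\alpha)\to(B,\beta)$ satisfies $h\circ\alpha=\beta\circ Fh$. Concretely, $G$ consists of expressions $m_0\otimes\cdots\otimes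 m_{n-1}\otimes z$ ($n\ge0$, $m_i\in M$, $z\in\{T,L,R\}$), taken modulo the identifications induced by the relations above and by $T=a\otimes T$, $L=b\otimes L$, $R=c\otimes R$ (i.e. $G$ is the colimit in $\mathbf{Set_3}$ of $I\to FI\to F^2I\to\cdots$ with $I=\{T,L,R\}$), and $g(m\otimes w)=m\otimes w$. The discrete metric is $d(x,y)=1$ for $x\ne y$. *)

theory Defs
  imports "HOL-Analysis.Analysis"
begin

datatype m3 = Ma | Mb | Mc

definition tripointed :: "'a set \<Rightarrow> 'a \<Rightarrow> 'a \<Rightarrow> 'a \<Rightarrow> bool" where
  "tripointed X T L R \<longleftrightarrow> T \<in> X \<and> L \<in> X \<and> R \<in> X \<and> T \<noteq> L \<and> T \<noteq> R \<and> L \<noteq> R"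

definition tripointed_metric :: "'a set \<Rightarrow> 'a \<Rightarrow> 'a \<Rightarrow> 'a \<Rightarrow> ('a \<Rightarrow> 'a \<Rightarrow> real) \<Rightarrow> bool" where
  "tripointed_metric X T L R d \<longleftrightarrow> tripointed X T L R \<and> Metric_space X d
     \<and> (\<forall>x\<in>X. \<forall>y\<in>X. d x y \<le> 1) \<and> d T L = 1 \<and> d T R = 1 \<and> d L R = 1"

definition mcont :: "'a set \<Rightarrow> ('a \<Rightarrow> 'a \<Rightarrow> real) \<Rightarrow> ('b \<Rightarrow> 'b \<Rightarrow> real) \<Rightarrow> ('a \<Rightarrow> 'b) \<Rightarrow> bool" where
  "mcont X dX dY f \<longleftrightarrow> (\<forall>x\<in>X. \<forall>e>0. \<exists>\<delta>>0. \<forall>y\<in>X. dX x y < \<delta> \<longrightarrow> dY (f x) (f y) < e)"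

definition tgen :: "'a \<Rightarrow> 'a \<Rightarrow> 'a \<Rightarrow> ((m3 \<times> 'a) \<times> (m3 \<times> 'a)) set" where
  "tgen T L R = {((Mb, T), (Ma, L)), ((Ma, R), (Mc, T)), ((Mc, L), (Mb, R))}"

definition teqv :: "'a set \<Rightarrow> 'a \<Rightarrow> 'a \<Rightarrow> 'a \<Rightarrow> ((m3 \<times> 'a) \<times> (m3 \<times> 'a)) set" where
  "teqv X T L R = Id_on (UNIV \<times> X) \<union> (tgen T L R \<union> (tgen T L R)\<inverse>)\<^sup>+"

definition tens :: "'a set \<Rightarrow> 'a \<Rightarrow> 'a \<Rightarrow> 'a \<Rightarrow> (m3 \<times> 'a) set set" where
  "tens X T L R = (UNIV \<times> X) // teqv X T L R"

definition tel :: "'a set \<Rightarrow> 'a \<Rightarrow> 'a \<Rightarrow> 'a \<Rightarrow> m3 \<Rightarrow> 'a \<Rightarrow> (m3 \<times> 'a) set" where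
  "tel X T L R m x = teqv X T L R `` {(m, x)}"

definition pdist :: "('a \<Rightarrow> 'a \<Rightarrow> real) \<Rightarrow> (m3 \<times> 'a) \<Rightarrow> (m3 \<times> 'a) \<Rightarrow> real" where
  "pdist d p q = (if fst p = fst q then d (snd p) (snd q) / 2 else 1)"

definition tdist :: "'a set \<Rightarrow> 'a \<Rightarrow> 'a \<Rightarrow> 'a \<Rightarrow> ('a \<Rightarrow> 'a \<Rightarrow> real)
    \<Rightarrow> (m3 \<times> 'a) set \<Rightarrow> (m3 \<times> 'a) set \<Rightarrow> real" where
  "tdist X T L R d C D = Inf {(\<Sum>i<n. pdist d (xs ! i) (ys ! i)) | n xs ys.
      n \<ge> 1 \<and> length xs = n \<and> length ys = n
      \<and> set xs \<subseteq> UNIV \<times> X \<and> set ys \<subseteq> UNIV \<times> X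
      \<and> xs ! 0 \<in> C \<and> ys ! (n - 1) \<in> D
      \<and> (\<forall>i. i + 1 < n \<longrightarrow> (ys ! i, xs ! (i + 1)) \<in> teqv X T L R)}"

definition set_falg :: "'a set \<Rightarrow> 'a \<Rightarrow> 'a \<Rightarrow> 'a \<Rightarrow> ((m3 \<times> 'a) set \<Rightarrow> 'a) \<Rightarrow> bool" where
  "set_falg A T L R \<alpha> \<longleftrightarrow> tripointed A T L R \<and> \<alpha> \<in> tens A T L R \<rightarrow> A
     \<and> \<alpha> (tel A T L R Ma T) = T \<and> \<alpha> (tel A T L R Mb L) = L \<and> \<alpha> (tel A T L R Mc R) = R"

definition met_falg :: "'a set \<Rightarrow> 'a \<Rightarrow> 'a \<Rightarrow> 'a \<Rightarrow> ('a \<Rightarrow> 'a \<Rightarrow> real)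
    \<Rightarrow> ((m3 \<times> 'a) set \<Rightarrow> 'a) \<Rightarrow> bool" where
  "met_falg A T L R d \<alpha> \<longleftrightarrow> tripointed_metric A T L R d \<and> set_falg A T L R \<alpha>
     \<and> mcont (tens A T L R) (tdist A T L R d) d \<alpha>"

definition set_alg_morph :: "'a set \<Rightarrow> 'a \<Rightarrow> 'a \<Rightarrow> 'a \<Rightarrow> ((m3 \<times> 'a) set \<Rightarrow> 'a)
    \<Rightarrow> 'b set \<Rightarrow> 'b \<Rightarrow> 'b \<Rightarrow> 'b \<Rightarrow> ((m3 \<times> 'b) set \<Rightarrow> 'b) \<Rightarrow> ('a \<Rightarrow> 'b) \<Rightarrow> bool" where
  "set_alg_morph A TA LA RA \<alpha> B TB LB RB \<beta> h \<longleftrightarrow>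
     h \<in> A \<rightarrow> B \<and> h TA = TB \<and> h LA = LB \<and> h RA = RB
     \<and> (\<forall>m. \<forall>x\<in>A. h (\<alpha> (tel A TA LA RA m x)) = \<beta> (tel B TB LB RB m (h x)))"

definition met_alg_morph :: "'a set \<Rightarrow> 'a \<Rightarrow> 'a \<Rightarrow> 'a \<Rightarrow> ('a \<Rightarrow> 'a \<Rightarrow> real) \<Rightarrow> ((m3 \<times> 'a) set \<Rightarrow> 'a)
    \<Rightarrow> 'b set \<Rightarrow> 'b \<Rightarrow> 'b \<Rightarrow> 'b \<Rightarrow> ('b \<Rightarrow> 'b \<Rightarrow> real) \<Rightarrow> ((m3 \<times> 'b) set \<Rightarrow> 'b)
    \<Rightarrow> ('a \<Rightarrow> 'b) \<Rightarrow> bool" where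
  "met_alg_morph A TA LA RA dA \<alpha> B TB LB RB dB \<beta> h \<longleftrightarrow>
     set_alg_morph A TA LA RA \<alpha> B TB LB RB \<beta> h \<and> mcont A dA dB h"

datatype tri = zT | zL | zR

text \<open>Expressions m_0 \<otimes> ... \<otimes> m_(n-1) \<otimes> z are pairs ([m_0,...,m_(n-1)], z).
  Generating identifications: the relations applied at the innermost position
  (under any prefix w), and T = a \<otimes> T, L = b \<otimes> L, R = c \<otimes> R (under any prefix).\<close>
definition Ggen :: "((m3 list \<times> tri) \<times> (m3 list \<times> tri)) set" where
  "Ggen = {((w @ [Mb], zT), (w @ [Ma], zL)) | w. True}
        \<union> {((w @ [Ma], zR), (w @ [Mc], zT)) | w. True}
        \<union> {((w @ [Mc], zL), (w @ [Mb], zR)) | w. True}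
        \<union> {((w, zT), (w @ [Ma], zT)) | w. True}
        \<union> {((w, zL), (w @ [Mb], zL)) | w. True}
        \<union> {((w, zR), (w @ [Mc], zR)) | w. True}"

definition Geqv :: "((m3 list \<times> tri) \<times> (m3 list \<times> tri)) set" where
  "Geqv = (Ggen \<union> Ggen\<inverse>)\<^sup>*"

definition Gcls :: "m3 list \<Rightarrow> tri \<Rightarrow> (m3 list \<times> tri) set" where
  "Gcls w z = Geqv `` {(w, z)}"

definition Gset :: "(m3 list \<times> tri) set set" where
  "Gset = UNIV // Geqv"

definition GT :: "(m3 list \<times> tri) set" where "GT = Gcls [] zT"
definition GL :: "(m3 list \<times> tri) set" where "GL = Gcls [] zL"
definition GR :: "(m3 list \<times> tri) set" where "GR = Gcls [] zR"

definition gstr :: "(m3 \<times> (m3 list \<times> tri) set) set \<Rightarrow> (m3 list \<times> tri) set" where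
  "gstr C = \<Union>{Gcls (m # w) z | m w z. (m, Gcls w z) \<in> C}"

definition ddisc :: "'a \<Rightarrow> 'a \<Rightarrow> real" where
  "ddisc x y = (if x = y then 0 else 1)"

end

theory Submission
  imports Defs
begin

lemma teqv_equiv:
  assumes "tripointed X T L R"
  shows "equiv (UNIV \<times> X) (teqv X T L R)"
proof -
  let ?S = "tgen T L R \<union> (tgen T L R)\<inverse>"
  have S: "?S \<subseteq> (UNIV \<times> X) \<times> (UNIV \<times> X)"
    using assms unfolding tripointed_def tgen_def by auto
  have Sp: "?S\<^sup>+ \<subseteq> (UNIV \<times> X) \<times> (UNIV \<times> X)"
    using trancl_subset_Sigma[OF S] .
  have sy: "sym (?S\<^sup>+)"
    by (intro sym_trancl) (auto simp: sym_def)
  show ?thesis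
    unfolding equiv_def refl_on_def teqv_def
  proof (intro conjI)
    show "Id_on (UNIV \<times> X) \<union> ?S\<^sup>+ \<subseteq> (UNIV \<times> X) \<times> (UNIV \<times> X)"
      using Sp by auto
    show "\<forall>x\<in>UNIV \<times> X. (x, x) \<in> Id_on (UNIV \<times> X) \<union> ?S\<^sup>+" by auto
    show "sym (Id_on (UNIV \<times> X) \<union> ?S\<^sup>+)"
      using sy unfolding sym_def by auto
    show "trans (Id_on (UNIV \<times> X) \<union> ?S\<^sup>+)"
    proof (rule transI)
      fix x y z
      assume 1: "(x, y) \<in> Id_on (UNIV \<times> X) \<union> ?S\<^sup>+" and 2: "(y, z) \<in> Id_on (UNIV \<times> X) \<union> ?S\<^sup>+"
      show "(x, z) \<in> Id_on (UNIV \<times> X) \<union> ?S\<^sup>+"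
      proof (cases "(x, y) \<in> Id_on (UNIV \<times> X)")
        case True then show ?thesis using 2 by auto
      next
        case False
        then have xy: "(x, y) \<in> ?S\<^sup>+" using 1 by blast
        show ?thesis
        proof (cases "(y, z) \<in> Id_on (UNIV \<times> X)")
          case True then show ?thesis using xy by auto
        next
          case False
          then have "(y, z) \<in> ?S\<^sup>+" using 2 by blast
          then show ?thesis using xy trancl_trans by (metis UnI2)
        qed
      qed
    qed
  qed
qed

lemma Geqv_equiv: "equiv UNIV Geqv"
  unfolding Geqv_def
  by (intro equivI refl_rtrancl sym_rtrancl trans_rtrancl) (auto simp: sym_def)

lemma Gcls_eq: "Gcls w z = Gcls w' z' \<longleftrightarrow> ((w,z),(w',z')) \<in> Geqv"
  unfolding Gcls_def using equiv_class_eq_iff[OF Geqv_equiv] by auto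

lemma Gcls_in: "(w,z) \<in> Gcls w z"
  unfolding Gcls_def Geqv_def by auto

lemma Gcls_Gset: "Gcls w z \<in> Gset"
  unfolding Gcls_def Gset_def by (rule quotientI) simp

lemma Gset_E: assumes "C \<in> Gset" obtains w z where "C = Gcls w z"
  using assms unfolding Gset_def Gcls_def by (auto elim!: quotientE)

lemma Ggen_cons: "(p,q) \<in> Ggen \<Longrightarrow> (((m # fst p), snd p), ((m # fst q), snd q)) \<in> Ggen"
  unfolding Ggen_def
  apply (elim UnE CollectE exE conjE)
  apply (simp_all only: Pair_inject prod.inject)
  apply (fastforce intro: exI[of _ "m # w" for w])+
  done

lemma Geqv_cons:
  assumes "((w,z),(w',z')) \<in> Geqv"
  shows "((m#w,z),(m#w',z')) \<in> Geqv"
proof -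
  let ?f = "\<lambda>p. (m # fst p, snd p)"
  have "(p,q) \<in> (Ggen \<union> Ggen\<inverse>)\<^sup>* \<Longrightarrow> (?f p, ?f q) \<in> (Ggen \<union> Ggen\<inverse>)\<^sup>*" for p q
  proof (induction rule: rtrancl_induct)
    case base then show ?case by simp
  next
    case (step y zz)
    then have "(?f y, ?f zz) \<in> Ggen \<union> Ggen\<inverse>"
      using Ggen_cons by (metis (no_types, lifting) Un_iff converse_iff)
    then show ?case using step by (meson rtrancl.rtrancl_into_rtrancl)
  qed
  then show ?thesis using assms unfolding Geqv_def by fastforce
qed

definition grep' :: "(m3 list \<times> tri) set \<Rightarrow> m3 list \<times> tri" where
  "grep' C = (SOME p. p \<in> C)"

definition phi :: "m3 \<times> (m3 list \<times> tri) set \<Rightarrow> (m3 list \<times> tri) set" where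
  "phi p = Gcls (fst p # fst (grep' (snd p))) (snd (grep' (snd p)))"

lemma grep_Gcls: "((w,z), grep' (Gcls w z)) \<in> Geqv"
proof -
  have "grep' (Gcls w z) \<in> Gcls w z" unfolding grep'_def by (rule someI, rule Gcls_in)
  then show ?thesis unfolding Gcls_def by auto
qed

lemma Gcls_grep: "Gcls (m # fst (grep' (Gcls w z))) (snd (grep' (Gcls w z))) = Gcls (m#w) z"
  using Geqv_cons[of w z "fst (grep' (Gcls w z))" "snd (grep' (Gcls w z))" m] grep_Gcls[of w z]
    Gcls_eq by (metis prod.collapse)

lemma phi_Gcls: "phi (m, Gcls w z) = Gcls (m#w) z"
  unfolding phi_def using Gcls_grep by simp

lemma Ggen_Geqv: "(p,q) \<in> Ggen \<Longrightarrow> (p,q) \<in> Geqv"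
  unfolding Geqv_def by auto


lemma phi_teqv:
  assumes "(p,q) \<in> teqv Gset GT GL GR"
  shows "phi p = phi q"
proof -
  have b1: "phi (Mb, GT) = phi (Ma, GL)"
    unfolding GT_def GL_def phi_Gcls Gcls_eq
    by (rule Ggen_Geqv) (unfold Ggen_def, auto)
  have b2: "phi (Ma, GR) = phi (Mc, GT)"
    unfolding GT_def GR_def phi_Gcls Gcls_eq
    by (rule Ggen_Geqv) (unfold Ggen_def, auto)
  have b3: "phi (Mc, GL) = phi (Mb, GR)"
    unfolding GL_def GR_def phi_Gcls Gcls_eq
    by (rule Ggen_Geqv) (unfold Ggen_def, auto)
  have "(p,q) \<in> (tgen GT GL GR \<union> (tgen GT GL GR)\<inverse>)\<^sup>+ \<Longrightarrow> phi p = phi q"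
  proof (induction rule: trancl_induct)
    case (base y)
    then show ?case using b1 b2 b3 unfolding tgen_def by auto
  next
    case (step y z)
    then show ?case using b1 b2 b3 unfolding tgen_def by auto
  qed
  then show ?thesis using assms unfolding teqv_def by auto
qed

lemma gstr_tel: "gstr (tel Gset GT GL GR m (Gcls w z)) = Gcls (m#w) z"
proof -
  have mem: "(m, Gcls w z) \<in> teqv Gset GT GL GR `` {(m, Gcls w z)}"
    unfolding teqv_def using Gcls_Gset by auto
  have all: "Gcls (m'#w') z' = Gcls (m#w) z"
    if "(m', Gcls w' z') \<in> teqv Gset GT GL GR `` {(m, Gcls w z)}" for m' w' z'
    using phi_teqv[of "(m, Gcls w z)" "(m', Gcls w' z')"] that phi_Gcls by auto
  have "{Gcls (m' # w') z' | m' w' z'. (m', Gcls w' z') \<in> tel Gset GT GL GR m (Gcls w z)}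
        = {Gcls (m#w) z}"
    using all mem unfolding tel_def by blast
  then show ?thesis unfolding gstr_def by simp
qed

fun lt :: "tri \<Rightarrow> m3" where
  "lt zT = Ma" | "lt zL = Mb" | "lt zR = Mc"

definition ginv :: "m3 list \<times> tri \<Rightarrow> tri option" where
  "ginv p = (if set (fst p) \<subseteq> {lt (snd p)} then Some (snd p) else None)"

lemma ginv_Ggen: "(p,q) \<in> Ggen \<Longrightarrow> ginv p = ginv q"
  unfolding Ggen_def ginv_def by auto

lemma ginv_Geqv: assumes "(p,q) \<in> Geqv" shows "ginv p = ginv q"
proof -
  have "(p,q) \<in> (Ggen \<union> Ggen\<inverse>)\<^sup>* \<Longrightarrow> ginv p = ginv q"
  proof (induction rule: rtrancl_induct)
    case base then show ?case by simp
  next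
    case (step y z) then show ?case using ginv_Ggen by (metis Un_iff converse_iff)
  qed
  then show ?thesis using assms unfolding Geqv_def by auto
qed

lemma trip_G: "tripointed Gset GT GL GR"
proof -
  have "GT \<noteq> GL" "GT \<noteq> GR" "GL \<noteq> GR"
    unfolding GT_def GL_def GR_def Gcls_eq
    by (auto dest!: ginv_Geqv simp: ginv_def)
  then show ?thesis unfolding tripointed_def GT_def GL_def GR_def using Gcls_Gset by auto
qed

definition base :: "'a \<Rightarrow> 'a \<Rightarrow> 'a \<Rightarrow> tri \<Rightarrow> 'a" where
  "base T L R z = (case z of zT \<Rightarrow> T | zL \<Rightarrow> L | zR \<Rightarrow> R)"

definition evl :: "'a set \<Rightarrow> 'a \<Rightarrow> 'a \<Rightarrow> 'a \<Rightarrow> ((m3 \<times> 'a) set \<Rightarrow> 'a) \<Rightarrow> m3 list \<Rightarrow> tri \<Rightarrow> 'a" where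
  "evl A T L R \<alpha> w z = foldr (\<lambda>m x. \<alpha> (tel A T L R m x)) w (base T L R z)"

lemma tel_tens: "x \<in> A \<Longrightarrow> tel A T L R m x \<in> tens A T L R"
  unfolding tel_def tens_def by (rule quotientI) simp

lemma evl_in:
  assumes "set_falg A T L R \<alpha>"
  shows "evl A T L R \<alpha> w z \<in> A"
proof (induction w)
  case Nil then show ?case using assms
    unfolding evl_def base_def set_falg_def tripointed_def by (cases z) auto
next
  case (Cons m w)
  have "tel A T L R m (evl A T L R \<alpha> w z) \<in> tens A T L R" by (rule tel_tens[OF Cons])
  then show ?case using assms unfolding evl_def set_falg_def by (auto simp: Pi_iff)
qed

lemma tel_rel:
  assumes "tripointed A T L R" "((m,x),(m',y)) \<in> tgen T L R"
  shows "tel A T L R m x = tel A T L R m' y"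
proof -
  have "((m,x),(m',y)) \<in> teqv A T L R" using assms(2) unfolding teqv_def by auto
  then show ?thesis unfolding tel_def using equiv_class_eq_iff[OF teqv_equiv[OF assms(1)]] by blast
qed

lemma evl_Ggen:
  assumes "set_falg A T L R \<alpha>" "(p,q) \<in> Ggen"
  shows "evl A T L R \<alpha> (fst p) (snd p) = evl A T L R \<alpha> (fst q) (snd q)"
proof -
  have tr: "tripointed A T L R" using assms(1) unfolding set_falg_def by auto
  have e1: "\<alpha> (tel A T L R Mb T) = \<alpha> (tel A T L R Ma L)"
    using tel_rel[OF tr, of Mb T Ma L] unfolding tgen_def by auto
  have e2: "\<alpha> (tel A T L R Ma R) = \<alpha> (tel A T L R Mc T)"
    using tel_rel[OF tr, of Ma R Mc T] unfolding tgen_def by auto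
  have e3: "\<alpha> (tel A T L R Mc L) = \<alpha> (tel A T L R Mb R)"
    using tel_rel[OF tr, of Mc L Mb R] unfolding tgen_def by auto
  show ?thesis using assms(2) e1 e2 e3 assms(1)
    unfolding Ggen_def evl_def set_falg_def base_def by auto
qed

lemma evl_Geqv:
  assumes "set_falg A T L R \<alpha>" "(p,q) \<in> Geqv"
  shows "evl A T L R \<alpha> (fst p) (snd p) = evl A T L R \<alpha> (fst q) (snd q)"
proof -
  have "(p,q) \<in> (Ggen \<union> Ggen\<inverse>)\<^sup>* \<Longrightarrow> ?thesis"
  proof (induction rule: rtrancl_induct)
    case base then show ?case by simp
  next
    case (step y z) then show ?case using evl_Ggen[OF assms(1)] by (metis Un_iff converse_iff)
  qed
  then show ?thesis using assms unfolding Geqv_def by auto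
qed

definition hG :: "'a set \<Rightarrow> 'a \<Rightarrow> 'a \<Rightarrow> 'a \<Rightarrow> ((m3 \<times> 'a) set \<Rightarrow> 'a) \<Rightarrow> (m3 list \<times> tri) set \<Rightarrow> 'a" where
  "hG A T L R \<alpha> C = evl A T L R \<alpha> (fst (grep' C)) (snd (grep' C))"

lemma hG_Gcls:
  assumes "set_falg A T L R \<alpha>"
  shows "hG A T L R \<alpha> (Gcls w z) = evl A T L R \<alpha> w z"
  using evl_Geqv[OF assms grep_Gcls[of w z]] unfolding hG_def by simp

lemma hG_morph:
  assumes "set_falg A T L R \<alpha>"
  shows "set_alg_morph Gset GT GL GR gstr A T L R \<alpha> (hG A T L R \<alpha>)"
  unfolding set_alg_morph_def
proof (intro conjI allI ballI)
  show "hG A T L R \<alpha> \<in> Gset \<rightarrow> A"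
    using evl_in[OF assms] hG_Gcls[OF assms] by (auto elim!: Gset_E)
  show "hG A T L R \<alpha> GT = T" "hG A T L R \<alpha> GL = L" "hG A T L R \<alpha> GR = R"
    unfolding GT_def GL_def GR_def hG_Gcls[OF assms] by (simp_all add: evl_def base_def)
  fix m x assume "x \<in> Gset"
  then obtain w z where x: "x = Gcls w z" by (rule Gset_E)
  show "hG A T L R \<alpha> (gstr (tel Gset GT GL GR m x)) = \<alpha> (tel A T L R m (hG A T L R \<alpha> x))"
    unfolding x gstr_tel hG_Gcls[OF assms] by (simp add: evl_def)
qed

lemma morph_unique:
  assumes "set_falg A T L R \<alpha>" "set_alg_morph Gset GT GL GR gstr A T L R \<alpha> h"
  shows "h (Gcls w z) = evl A T L R \<alpha> w z"
proof (induction w)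
  case Nil
  then show ?case using assms(2) unfolding set_alg_morph_def GT_def GL_def GR_def
    by (cases z) (auto simp: evl_def base_def)
next
  case (Cons m w)
  have "h (Gcls (m#w) z) = h (gstr (tel Gset GT GL GR m (Gcls w z)))" by (simp add: gstr_tel)
  also have "\<dots> = \<alpha> (tel A T L R m (h (Gcls w z)))"
    using assms(2) Gcls_Gset unfolding set_alg_morph_def by blast
  finally show ?case using Cons by (simp add: evl_def)
qed

lemma pdist_ddisc: "pdist ddisc p q = 0 \<or> pdist ddisc p q \<ge> 1/2"
  unfolding pdist_def ddisc_def by auto

lemma pdist_ddisc0: "pdist ddisc p q = 0 \<Longrightarrow> p = q"
  unfolding pdist_def ddisc_def by (auto split: if_splits simp: prod_eq_iff)

lemma tdist_small:
  assumes tr: "tripointed X T L R" and C: "C \<in> tens X T L R" and D: "D \<in> tens X T L R"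
    and lt: "tdist X T L R ddisc C D < 1/2"
  shows "C = D"
proof -
  have eqv: "equiv (UNIV \<times> X) (teqv X T L R)" by (rule teqv_equiv[OF tr])
  let ?S = "{(\<Sum>i<n. pdist ddisc (xs ! i) (ys ! i)) | n xs ys.
      n \<ge> 1 \<and> length xs = n \<and> length ys = n
      \<and> set xs \<subseteq> UNIV \<times> X \<and> set ys \<subseteq> UNIV \<times> X
      \<and> xs ! 0 \<in> C \<and> ys ! (n - 1) \<in> D
      \<and> (\<forall>i. i + 1 < n \<longrightarrow> (ys ! i, xs ! (i + 1)) \<in> teqv X T L R)}"
  obtain p where p: "p \<in> UNIV \<times> X" "C = teqv X T L R `` {p}" using C unfolding tens_def by (auto elim!: quotientE)
  obtain q where q: "q \<in> UNIV \<times> X" "D = teqv X T L R `` {q}" using D unfolding tens_def by (auto elim!: quotientE)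
  have pC: "p \<in> C" unfolding p(2) by (rule equiv_class_self[OF eqv p(1)])
  have qD: "q \<in> D" unfolding q(2) by (rule equiv_class_self[OF eqv q(1)])
  have "(\<Sum>i<1. pdist ddisc ([p] ! i) ([q] ! i)) \<in> ?S"
    using p q pC qD by (intro CollectI exI[of _ 1] exI[of _ "[p]"] exI[of _ "[q]"]) auto
  then have ne: "?S \<noteq> {}" by blast
  have "tdist X T L R ddisc C D = Inf ?S" unfolding tdist_def ..
  then have "Inf ?S < 1/2" using lt by simp
  then have "\<exists>s\<in>?S. s < 1/2" by (rule cInf_lessD[OF ne])
  then obtain s where "s \<in> ?S" "s < 1/2" by blast
  then obtain n xs ys where n: "n \<ge> 1" "length xs = n" "length ys = n"
      "set xs \<subseteq> UNIV \<times> X" "xs ! 0 \<in> C" "ys ! (n - 1) \<in> D"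
      "\<forall>i. i + 1 < n \<longrightarrow> (ys ! i, xs ! (i + 1)) \<in> teqv X T L R"
      and sm: "(\<Sum>i<n. pdist ddisc (xs ! i) (ys ! i)) < 1/2" by blast
  have zero: "xs ! i = ys ! i" if "i < n" for i
  proof -
    have "pdist ddisc (xs ! i) (ys ! i) \<le> (\<Sum>i<n. pdist ddisc (xs ! i) (ys ! i))"
      using that by (intro member_le_sum) (auto simp: pdist_def ddisc_def)
    then have "pdist ddisc (xs ! i) (ys ! i) = 0" using sm pdist_ddisc[of "xs ! i" "ys ! i"] by linarith
    then show ?thesis by (rule pdist_ddisc0)
  qed
  have chain: "k < n \<Longrightarrow> (xs ! 0, ys ! k) \<in> teqv X T L R" for k
  proof (induction k)
    case 0
    have "xs ! 0 \<in> set xs" using n(1,2) by (intro nth_mem) simp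
    then have "xs ! 0 \<in> UNIV \<times> X" using n(4) by blast
    then show ?case using zero[of 0] 0 eqv unfolding equiv_def refl_on_def by auto
  next
    case (Suc k)
    have "(ys ! k, xs ! Suc k) \<in> teqv X T L R" using n(7) Suc.prems by auto
    moreover have "xs ! Suc k = ys ! Suc k" using zero Suc.prems by blast
    moreover have "(xs ! 0, ys ! k) \<in> teqv X T L R" using Suc.IH Suc.prems by simp
    moreover have "trans (teqv X T L R)" using eqv unfolding equiv_def by blast
    ultimately show ?case by (metis transD)
  qed
  have "(xs ! 0, ys ! (n-1)) \<in> teqv X T L R" using chain n(1) by simp
  then show ?thesis
    using quotient_eqI[OF eqv, of C D "xs ! 0" "ys ! (n-1)"] C D n unfolding tens_def by blast
qed

lemma Gtel_E:
  assumes "C \<in> tens Gset GT GL GR"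
  obtains m w z where "C = tel Gset GT GL GR m (Gcls w z)"
proof -
  obtain p where p: "p \<in> UNIV \<times> Gset" "C = teqv Gset GT GL GR `` {p}"
    using assms unfolding tens_def by (auto elim!: quotientE)
  obtain w z where "snd p = Gcls w z" using p(1) by (auto elim!: Gset_E)
  then show ?thesis using that p unfolding tel_def by (metis prod.collapse)
qed

lemma mcontI2:
  assumes "\<And>x y. x \<in> X \<Longrightarrow> y \<in> X \<Longrightarrow> dX x y < 1/2 \<Longrightarrow> dY (f x) (f y) = 0"
  shows "mcont X dX dY f"
  unfolding mcont_def
proof (intro ballI allI impI)
  fix x and e :: real assume "x \<in> X" "0 < e"
  then show "\<exists>\<delta>>0. \<forall>y\<in>X. dX x y < \<delta> \<longrightarrow> dY (f x) (f y) < e"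
    using assms by (intro exI[of _ "1/2"]) auto
qed

lemma ddisc_ms: "Metric_space S ddisc"
  by unfold_locales (auto simp: ddisc_def)

lemma G_tm: "tripointed_metric Gset GT GL GR ddisc"
  using trip_G ddisc_ms unfolding tripointed_metric_def tripointed_def ddisc_def by auto

lemma gstr_Pi: "gstr \<in> tens Gset GT GL GR \<rightarrow> Gset"
proof
  fix C assume "C \<in> tens Gset GT GL GR"
  then obtain m w z where "C = tel Gset GT GL GR m (Gcls w z)" by (rule Gtel_E)
  then show "gstr C \<in> Gset" by (simp add: gstr_tel Gcls_Gset)
qed

lemma Gpt: "Gcls [] zT = Gcls [Ma] zT" "Gcls [] zL = Gcls [Mb] zL" "Gcls [] zR = Gcls [Mc] zR"
proof -
  have "(([] @ [], zT), ([] @ [Ma], zT)) \<in> Ggen" "(([] @ [], zL), ([] @ [Mb], zL)) \<in> Ggen"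
    "(([] @ [], zR), ([] @ [Mc], zR)) \<in> Ggen"
    unfolding Ggen_def by blast+
  then show "Gcls [] zT = Gcls [Ma] zT" "Gcls [] zL = Gcls [Mb] zL" "Gcls [] zR = Gcls [Mc] zR"
    unfolding Gcls_eq by (auto intro: Ggen_Geqv)
qed

lemma G_falg: "met_falg Gset GT GL GR ddisc gstr"
  unfolding met_falg_def
proof (intro conjI)
  show "tripointed_metric Gset GT GL GR ddisc" by (rule G_tm)
  have 1: "gstr (tel Gset GT GL GR Ma GT) = GT"
    using gstr_tel[of Ma "[]" zT] Gpt(1) unfolding GT_def by simp
  have 2: "gstr (tel Gset GT GL GR Mb GL) = GL"
    using gstr_tel[of Mb "[]" zL] Gpt(2) unfolding GL_def by simp
  have 3: "gstr (tel Gset GT GL GR Mc GR) = GR"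
    using gstr_tel[of Mc "[]" zR] Gpt(3) unfolding GR_def by simp
  show "set_falg Gset GT GL GR gstr"
    unfolding set_falg_def using trip_G gstr_Pi 1 2 3 by blast
  show "mcont (tens Gset GT GL GR) (tdist Gset GT GL GR ddisc) ddisc gstr"
    by (rule mcontI2) (use tdist_small[OF trip_G] in \<open>auto simp: ddisc_def\<close>)
qed

lemma disc_cont:
  assumes "Metric_space A dA" "h \<in> Gset \<rightarrow> A"
  shows "mcont Gset ddisc dA h"
proof (rule mcontI2)
  fix x y assume x: "x \<in> Gset" and "y \<in> Gset" "ddisc x y < 1/2"
  then have "y = x" by (auto simp: ddisc_def split: if_splits)
  moreover have "h x \<in> A" using assms(2) x by auto
  ultimately show "dA (h x) (h y) = 0" using Metric_space.zero[OF assms(1), of "h x" "h x"] by auto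
qed

theorem mainTheorem3:
  shows "met_falg Gset GT GL GR ddisc gstr
    \<and> (\<forall>(A :: 'a set) TA LA RA dA \<alpha>. met_falg A TA LA RA dA \<alpha> \<longrightarrow>
         (\<forall>h. met_alg_morph Gset GT GL GR ddisc gstr A TA LA RA dA \<alpha> h
               \<longleftrightarrow> set_alg_morph Gset GT GL GR gstr A TA LA RA \<alpha> h)
       \<and> (\<exists>h. met_alg_morph Gset GT GL GR ddisc gstr A TA LA RA dA \<alpha> h
              \<and> (\<forall>h'. met_alg_morph Gset GT GL GR ddisc gstr A TA LA RA dA \<alpha> h'
                     \<longrightarrow> (\<forall>x\<in>Gset. h' x = h x))))"
proof (rule conjI[OF G_falg], (rule allI)+, rule impI, rule conjI)
  fix A :: "'a set" and TA LA RA dA \<alpha>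
  assume M: "met_falg A TA LA RA dA \<alpha>"
  have sf: "set_falg A TA LA RA \<alpha>" using M unfolding met_falg_def by auto
  have ms: "Metric_space A dA" using M unfolding met_falg_def tripointed_metric_def by auto
  have iff: "met_alg_morph Gset GT GL GR ddisc gstr A TA LA RA dA \<alpha> h
               \<longleftrightarrow> set_alg_morph Gset GT GL GR gstr A TA LA RA \<alpha> h" for h
    unfolding met_alg_morph_def using disc_cont[OF ms] unfolding set_alg_morph_def by blast
  then show "\<forall>h. met_alg_morph Gset GT GL GR ddisc gstr A TA LA RA dA \<alpha> h
               \<longleftrightarrow> set_alg_morph Gset GT GL GR gstr A TA LA RA \<alpha> h" by blast
  show "\<exists>h. met_alg_morph Gset GT GL GR ddisc gstr A TA LA RA dA \<alpha> h
              \<and> (\<forall>h'. met_alg_morph Gset GT GL GR ddisc gstr A TA LA RA dA \<alpha> h'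
                     \<longrightarrow> (\<forall>x\<in>Gset. h' x = h x))"
  proof (intro exI[of _ "hG A TA LA RA \<alpha>"] conjI allI impI ballI)
    show "met_alg_morph Gset GT GL GR ddisc gstr A TA LA RA dA \<alpha> (hG A TA LA RA \<alpha>)"
      using iff hG_morph[OF sf] by blast
    fix h' x assume h': "met_alg_morph Gset GT GL GR ddisc gstr A TA LA RA dA \<alpha> h'" and x: "x \<in> Gset"
    obtain w z where xw: "x = Gcls w z" using x by (rule Gset_E)
    have "set_alg_morph Gset GT GL GR gstr A TA LA RA \<alpha> h'" using h' iff by blast
    then show "h' x = hG A TA LA RA \<alpha> x"
      unfolding xw using morph_unique[OF sf] hG_Gcls[OF sf] by simp
  qed
qed

end
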